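(* Let $\beta=\gamma^2/(2\kappa\sigma^2)$ and define, for $t>0$ and $z\ge c$, $$U(t,z)=\frac1\beta\log\Bigg(\mathrm{erf}\Big(\frac{z-c}{\sigma\sqrt{2t}}\Big)+e^{-\beta(z-c)+\beta^2\sigma^2t/2}\bigg[1-\mathrm{erf}\Big(\frac{z-c}{\sigma\sqrt{2t}}-\frac{\beta\sigma\sqrt t}{\sqrt2}\Big)\bigg]\Bigg).$$ Then $U$ satisfies $$\partial_t U(t,z)=\frac{\sigma^2}2\partial_{zz}U(t,z)+\frac{\gamma^2}{4\kappa}\big(\partial_zU(t,z)\big)^2\qquad\text{in }(0,T]\times[c,\infty),$$ with boundary condition $\partial_zU(t,c)=-1$ for all $t\in(0,T]$.
   Context: $\sigma,\gamma,\kappa,T>0$ and $c\in\mathbb R$ are constants; $\mathrm{erf}(x)=\frac{2}{\sqrt\pi}\int_0^xe^{-y^2}\,dy$ is the Gaussian error function. (This $U$ coincides with $\frac1\beta\log E[\exp(\beta\sigma L_t^{(z-c)/\sigma}(W))]$ for a standard Brownian motion $W$ with local time $L$.) *)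

theory Defs
  imports "HOL-Analysis.Analysis"
begin

definition erf :: "real \<Rightarrow> real" where
  "erf x = 2 / sqrt pi *
     (if 0 \<le> x then integral {0..x} (\<lambda>y. exp (- (y\<^sup>2)))
      else - integral {x..0} (\<lambda>y. exp (- (y\<^sup>2))))"

definition beta_par :: "real \<Rightarrow> real \<Rightarrow> real \<Rightarrow> real" where
  "beta_par \<sigma> \<gamma> \<kappa> = \<gamma>\<^sup>2 / (2 * \<kappa> * \<sigma>\<^sup>2)"

definition U :: "real \<Rightarrow> real \<Rightarrow> real \<Rightarrow> real \<Rightarrow> real \<Rightarrow> real \<Rightarrow> real" where
  "U \<sigma> \<gamma> \<kappa> c t z =
     (let \<beta> = beta_par \<sigma> \<gamma> \<kappa> in
      (1 / \<beta>) * ln (erf ((z - c) / (\<sigma> * sqrt (2 * t)))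
        + exp (- \<beta> * (z - c) + \<beta>\<^sup>2 * \<sigma>\<^sup>2 * t / 2)
          * (1 - erf ((z - c) / (\<sigma> * sqrt (2 * t)) - \<beta> * \<sigma> * sqrt t / sqrt 2))))"

end

theory Submission
  imports Defs "HOL-Probability.Probability"
begin

definition gf :: "real \<Rightarrow> real" where "gf y = exp (- (y\<^sup>2))"

lemma gf_cont: "continuous_on S gf"
  unfolding gf_def by (intro continuous_intros)

lemma gf_int: "gf integrable_on {a..b}"
  by (intro integrable_continuous_real gf_cont)

lemma erf_alt:
  assumes "-M \<le> y" "M \<ge> 0"
  shows "erf y = 2 / sqrt pi * (integral {-M..y} gf - integral {-M..0} gf)"
proof (cases "0 \<le> y")
  case True
  have "integral {-M..0} gf + integral {0..y} gf = integral {-M..y} gf"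
    using True assms by (intro Henstock_Kurzweil_Integration.integral_combine gf_int) auto
  then show ?thesis using True unfolding erf_def gf_def[abs_def] by simp
next
  case False
  have eq: "integral {-M..y} gf + integral {y..0} gf = integral {-M..0} gf"
    using False assms by (intro Henstock_Kurzweil_Integration.integral_combine gf_int) auto
  have "erf y = 2 / sqrt pi * (- integral {y..0} gf)" by (simp add: erf_def gf_def[abs_def] False)
  also have "- integral {y..0} gf = integral {-M..y} gf - integral {-M..0} gf" using eq by linarith
  finally show ?thesis .
qed

lemma erf_deriv: "(erf has_real_derivative (2 / sqrt pi * exp (- (x\<^sup>2)))) (at x)"
proof -
  define M where "M = \<bar>x\<bar> + 1"
  have d: "((\<lambda>y. integral {-M..y} gf) has_real_derivative gf x) (at x within {-M..M})"
    by (rule integral_has_real_derivative) (auto simp: M_def gf_cont)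
  have "x \<in> interior {-M..M}" unfolding interior_atLeastAtMost_real by (auto simp: M_def)
  then have e: "at x within {-M..M} = at x" by (rule at_within_interior)
  have "((\<lambda>y. integral {-M..y} gf) has_real_derivative gf x) (at x)"
    using d unfolding e .
  then have "((\<lambda>y. 2 / sqrt pi * (integral {-M..y} gf - integral {-M..0} gf)) has_real_derivative
      (2 / sqrt pi * (gf x - 0))) (at x)"
    by (rule DERIV_cmult[OF DERIV_diff[OF _ DERIV_const]])
  then have "((\<lambda>y. 2 / sqrt pi * (integral {-M..y} gf - integral {-M..0} gf)) has_real_derivative
      (2 / sqrt pi * exp (- (x\<^sup>2)))) (at x)" by (simp add: gf_def)
  then show ?thesis
  proof (rule has_field_derivative_transform_within_open[where S="{-M<..}"])
    show "open {-M<..}" by simp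
    show "x \<in> {-M<..}" by (auto simp: M_def)
    fix y assume "y \<in> {-M<..}"
    then show "2 / sqrt pi * (integral {-M..y} gf - integral {-M..0} gf) = erf y"
      using erf_alt[of M y] by (auto simp: M_def)
  qed
qed

lemma gauss_half: "(gf has_integral (sqrt pi / 2)) {0..}"
proof -
  have i: "integrable lborel (\<lambda>x. indicator {0..} x *\<^sub>R exp (- x\<^sup>2) :: real)"
    using gaussian_moment_0 by (auto simp: has_bochner_integral_iff)
  have v: "integral\<^sup>L lborel (\<lambda>x. indicator {0..} x *\<^sub>R exp (- x\<^sup>2) :: real) = sqrt pi / 2"
    using gaussian_moment_0 has_bochner_integral_integral_eq by blast
  have "((\<lambda>x. indicator {0..} x *\<^sub>R exp (- x\<^sup>2) :: real) has_integral sqrt pi / 2) UNIV"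
    using has_integral_integral_lborel[OF i] unfolding v .
  then have "((\<lambda>x. if x \<in> {0..} then gf x else 0) has_integral sqrt pi / 2) UNIV"
    by (rule has_integral_eq[rotated]) (auto simp: gf_def indicator_def)
  then show ?thesis by (simp only: has_integral_restrict_UNIV)
qed

lemma erf_lt1: "erf x < 1"
proof (cases "0 \<le> x")
  case False
  have "0 \<le> integral {x..0} gf" by (rule integral_nonneg) (auto simp: gf_int gf_def)
  have h: "erf x = 2 / sqrt pi * (- integral {x..0} gf)" by (simp add: erf_def gf_def[abs_def] False)
  have "2 / sqrt pi * (- integral {x..0} gf) \<le> 0" using \<open>0 \<le> integral {x..0} gf\<close> by (simp add: mult_le_0_iff)
  then show ?thesis using h by linarith
next
  case True
  have "integral {x..x+1} (\<lambda>_. exp (- ((x+1)\<^sup>2))) \<le> integral {x..x+1} gf"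
    apply (rule integral_le) apply (auto simp: gf_int gf_def)
    apply (subst power2_le_iff_abs_le) using True by auto
  moreover have "integral {x..x+1} (\<lambda>_. exp (- ((x+1)\<^sup>2))) = exp (- ((x+1)\<^sup>2))" by simp
  ultimately have pos: "0 < integral {x..x+1} gf" by (metis less_le_trans exp_gt_zero)
  have "integral {0..x} gf + integral {x..x+1} gf = integral {0..x+1} gf"
    using True by (intro Henstock_Kurzweil_Integration.integral_combine gf_int) auto
  also have "\<dots> \<le> integral {0..} gf"
    apply (rule integral_subset_le)
    subgoal by auto
    subgoal by (rule gf_int)
    subgoal using gauss_half by (rule has_integral_integrable)
    subgoal by (simp add: gf_def)
    done
  also have "\<dots> = sqrt pi / 2" using gauss_half by (rule integral_unique)
  finally have "integral {0..x} gf < sqrt pi / 2" using pos by linarith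
  then show ?thesis using True unfolding erf_def gf_def[abs_def] by (simp add: divide_simps)
qed

lemma erf_nonneg: "0 \<le> x \<Longrightarrow> 0 \<le> erf x"
proof -
  have "0 \<le> integral {0..x} gf" by (rule integral_nonneg) (auto simp: gf_int gf_def)
  then show "0 \<le> x \<Longrightarrow> 0 \<le> erf x" unfolding erf_def gf_def[abs_def] by simp
qed

lemma erf_0: "erf 0 = 0" unfolding erf_def by simp


lemma erf_chain[derivative_intros]:
  "(f has_real_derivative f') (at x within S) \<Longrightarrow>
   ((\<lambda>x. erf (f x)) has_real_derivative (2 / sqrt pi * exp (- ((f x)\<^sup>2)) * f')) (at x within S)"
  by (rule DERIV_chain2[OF erf_deriv])

definition XX :: "real \<Rightarrow> real \<Rightarrow> real \<Rightarrow> real \<Rightarrow> real" where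
  "XX \<sigma> c t y = (y - c) / (\<sigma> * sqrt 2 * sqrt t)"
definition WW :: "real \<Rightarrow> real \<Rightarrow> real \<Rightarrow> real \<Rightarrow> real \<Rightarrow> real" where
  "WW \<beta> \<sigma> c t y = (y - c) / (\<sigma> * sqrt 2 * sqrt t) - \<beta> * \<sigma> * sqrt t / sqrt 2"
definition EE :: "real \<Rightarrow> real \<Rightarrow> real \<Rightarrow> real \<Rightarrow> real \<Rightarrow> real" where
  "EE \<beta> \<sigma> c t y = exp (- \<beta> * (y - c) + \<beta>\<^sup>2 * \<sigma>\<^sup>2 * t / 2)"

lemma s2: "sqrt 2 * (sqrt 2 * x) = 2 * (x::real)" "sqrt 2 * sqrt 2 = (2::real)"
  by (simp_all add: mult.assoc[symmetric])

lemma key: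
  assumes "t > 0" "\<sigma> > 0"
  shows "EE \<beta> \<sigma> c t y * exp (- ((WW \<beta> \<sigma> c t y)\<^sup>2)) = exp (- ((XX \<sigma> c t y)\<^sup>2))"
proof -
  obtain q where q: "q > 0" "t = q\<^sup>2" using assms
    by (metis real_sqrt_gt_zero real_sqrt_pow2 less_imp_le)
  have sq: "sqrt t = q" using q by simp
  have r: "sqrt 2 ^ 2 = (2::real)" "sqrt 2 > (0::real)" by auto
  have "- \<beta> * (y - c) + \<beta>\<^sup>2 * \<sigma>\<^sup>2 * t / 2 - ((y - c) / (\<sigma> * sqrt 2 * sqrt t) - \<beta> * \<sigma> * sqrt t / sqrt 2)\<^sup>2
      = - (((y - c) / (\<sigma> * sqrt 2 * sqrt t))\<^sup>2)"
    unfolding sq using assms q r by (simp add: power2_diff field_simps) (simp add: eval_nat_numeral algebra_simps s2)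
  then show ?thesis unfolding EE_def WW_def XX_def by (simp add: exp_add[symmetric])
qed

lemma aux_nz: "(2::real) \<noteq> 0" "sqrt (2::real) \<noteq> 0" "(0::real) < 2" by auto

lemma XX_dy:
  assumes "t > 0" "\<sigma> > 0"
  shows "((\<lambda>y. XX \<sigma> c t y) has_real_derivative 1 / (\<sigma> * sqrt 2 * sqrt t)) (at y)"
proof -
  have nz: "\<sigma> * sqrt 2 * sqrt t \<noteq> 0" using assms by simp
  show ?thesis unfolding XX_def
    apply (rule derivative_eq_intros refl nz)+
    using nz by (simp add: field_simps)
qed

lemma WW_dy:
  assumes "t > 0" "\<sigma> > 0"
  shows "((\<lambda>y. WW \<beta> \<sigma> c t y) has_real_derivative 1 / (\<sigma> * sqrt 2 * sqrt t)) (at y)"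
proof -
  have nz: "\<sigma> * sqrt 2 * sqrt t \<noteq> 0" using assms by simp
  show ?thesis unfolding WW_def
    apply (rule derivative_eq_intros refl nz)+
    using nz by (simp add: field_simps)
qed

lemma EE_dy:
  shows "((\<lambda>y. EE \<beta> \<sigma> c t y) has_real_derivative - \<beta> * EE \<beta> \<sigma> c t y) (at y)"
  unfolding EE_def
  apply (rule derivative_eq_intros refl aux_nz)+
  by simp

lemma sqrt_chain:
  assumes "(f has_real_derivative f') (at x)" "0 < f x"
  shows "((\<lambda>x. sqrt (f x)) has_real_derivative (f' / (2 * sqrt (f x)))) (at x)"
proof -
  have d: "((\<lambda>x. sqrt (f x)) has_real_derivative inverse (sqrt (f x)) / 2 * f') (at x)"
    by (rule DERIV_chain2[OF DERIV_real_sqrt[OF assms(2)] assms(1)])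
  have eq: "inverse (sqrt (f x)) / 2 * f' = f' / (2 * sqrt (f x))" by (simp add: field_simps)
  show ?thesis using d unfolding eq .
qed

lemma XX_dt:
  assumes "t > 0" "\<sigma> > 0"
  shows "((\<lambda>s. XX \<sigma> c s y) has_real_derivative - XX \<sigma> c t y / (2 * t)) (at t)"
proof -
  have nz: "\<sigma> * sqrt 2 * sqrt t \<noteq> 0" using assms by simp
  obtain q where q: "q > 0" "t = q\<^sup>2" using assms
    by (metis real_sqrt_gt_zero real_sqrt_pow2 less_imp_le)
  have sq: "sqrt t = q" using q by simp
  show ?thesis unfolding XX_def
    apply (rule sqrt_chain derivative_eq_intros refl nz assms(1) aux_nz)+
    unfolding sq using q assms by (simp add: field_simps) (simp add: eval_nat_numeral algebra_simps s2)
qed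

lemma WW_dt:
  assumes "t > 0" "\<sigma> > 0"
  shows "((\<lambda>s. WW \<beta> \<sigma> c s y) has_real_derivative
     (- XX \<sigma> c t y / (2 * t) - \<beta> * \<sigma> / (2 * sqrt 2 * sqrt t))) (at t)"
proof -
  have nz: "\<sigma> * sqrt 2 * sqrt t \<noteq> 0" using assms by simp
  obtain q where q: "q > 0" "t = q\<^sup>2" using assms
    by (metis real_sqrt_gt_zero real_sqrt_pow2 less_imp_le)
  have sq: "sqrt t = q" using q by simp
  show ?thesis unfolding WW_def XX_def
    apply (rule sqrt_chain derivative_eq_intros refl nz assms(1) aux_nz)+
    unfolding sq using q assms by (simp add: field_simps) (simp add: eval_nat_numeral algebra_simps s2)
qed

lemma EE_dt:
  shows "((\<lambda>s. EE \<beta> \<sigma> c s y) has_real_derivative EE \<beta> \<sigma> c t y * (\<beta>\<^sup>2 * \<sigma>\<^sup>2 / 2)) (at t)"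
  unfolding EE_def
  apply (rule derivative_eq_intros refl aux_nz)+
  by (simp_all add: field_simps)

definition uu :: "real \<Rightarrow> real \<Rightarrow> real \<Rightarrow> real \<Rightarrow> real \<Rightarrow> real" where
  "uu \<beta> \<sigma> c t y = erf (XX \<sigma> c t y) + EE \<beta> \<sigma> c t y * (1 - erf (WW \<beta> \<sigma> c t y))"
definition NN :: "real \<Rightarrow> real \<Rightarrow> real \<Rightarrow> real \<Rightarrow> real \<Rightarrow> real" where
  "NN \<beta> \<sigma> c t y = - (EE \<beta> \<sigma> c t y * (1 - erf (WW \<beta> \<sigma> c t y)))"

lemma uy:
  assumes "t > 0" "\<sigma> > 0"
  shows "((\<lambda>y. uu \<beta> \<sigma> c t y) has_real_derivative \<beta> * NN \<beta> \<sigma> c t y) (at y)"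
proof -
  note k = key[OF assms, of \<beta> c y]
  show ?thesis unfolding uu_def
    apply (rule XX_dy[OF assms] WW_dy[OF assms] EE_dy derivative_eq_intros refl)+
    unfolding NN_def k[symmetric] by (simp add: algebra_simps)
qed

lemma Ny:
  assumes "t > 0" "\<sigma> > 0"
  shows "((\<lambda>y. NN \<beta> \<sigma> c t y) has_real_derivative
     (- \<beta> * NN \<beta> \<sigma> c t y + 2 / sqrt pi * exp (- ((XX \<sigma> c t y)\<^sup>2)) / (\<sigma> * sqrt 2 * sqrt t))) (at y)"
proof -
  note k = key[OF assms, of \<beta> c y]
  show ?thesis unfolding NN_def
    apply (rule XX_dy[OF assms] WW_dy[OF assms] EE_dy derivative_eq_intros refl)+
    unfolding k[symmetric] by (simp add: algebra_simps)
qed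

lemma ut:
  assumes "t > 0" "\<sigma> > 0"
  shows "((\<lambda>s. uu \<beta> \<sigma> c s y) has_real_derivative
     (- (\<beta>\<^sup>2 * \<sigma>\<^sup>2 / 2) * NN \<beta> \<sigma> c t y
       + 2 / sqrt pi * exp (- ((XX \<sigma> c t y)\<^sup>2)) * (\<beta> * \<sigma> / (2 * sqrt 2 * sqrt t)))) (at t)"
proof -
  note k = key[OF assms, of \<beta> c y]
  show ?thesis unfolding uu_def
    apply (rule XX_dt[OF assms] WW_dt[OF assms] EE_dt derivative_eq_intros refl)+
    unfolding NN_def k[symmetric] by (simp add: algebra_simps) (simp add: field_simps)
qed

lemma uu_pos:
  assumes "t > 0" "\<sigma> > 0" "y \<ge> c"
  shows "uu \<beta> \<sigma> c t y > 0"
proof -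
  have "XX \<sigma> c t y \<ge> 0" unfolding XX_def using assms by simp
  then have "erf (XX \<sigma> c t y) \<ge> 0" by (rule erf_nonneg)
  moreover have "EE \<beta> \<sigma> c t y > 0" unfolding EE_def by simp
  moreover have "1 - erf (WW \<beta> \<sigma> c t y) > 0" using erf_lt1 by simp
  ultimately show ?thesis unfolding uu_def by (simp add: add_nonneg_pos)
qed

theorem proposition3p2:
  fixes \<sigma> \<gamma> \<kappa> T c :: real
  assumes "\<sigma> > 0" "\<gamma> > 0" "\<kappa> > 0" "T > 0"
  shows "\<exists>Ut Uz Uzz :: real \<Rightarrow> real \<Rightarrow> real.
    (\<forall>t\<in>{0<..T}. \<forall>z\<in>{c..}.
       ((\<lambda>s. U \<sigma> \<gamma> \<kappa> c s z) has_real_derivative Ut t z) (at t within {0<..T}) \<and>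
       ((\<lambda>y. U \<sigma> \<gamma> \<kappa> c t y) has_real_derivative Uz t z) (at z within {c..}) \<and>
       ((\<lambda>y. Uz t y) has_real_derivative Uzz t z) (at z within {c..}) \<and>
       Ut t z = \<sigma>\<^sup>2 / 2 * Uzz t z + \<gamma>\<^sup>2 / (4 * \<kappa>) * (Uz t z)\<^sup>2) \<and>
    (\<forall>t\<in>{0<..T}. Uz t c = -1)"
proof -
  define \<beta> where "\<beta> = beta_par \<sigma> \<gamma> \<kappa>"
  have bpos: "\<beta> > 0" unfolding \<beta>_def beta_par_def using assms by simp
  have gam: "\<gamma>\<^sup>2 / (4 * \<kappa>) = \<beta> * \<sigma>\<^sup>2 / 2"
    unfolding \<beta>_def beta_par_def using assms by (simp add: field_simps)
  have Ueq: "\<And>s y. U \<sigma> \<gamma> \<kappa> c s y = 1 / \<beta> * ln (uu \<beta> \<sigma> c s y)"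
    unfolding U_def Let_def \<beta>_def[symmetric] uu_def XX_def WW_def EE_def
    by (simp add: real_sqrt_mult mult.assoc)
  define G where "G t y = 2 / sqrt pi * exp (- ((XX \<sigma> c t y)\<^sup>2)) / (\<sigma> * sqrt 2 * sqrt t)" for t y
  define Uz where "Uz t y = NN \<beta> \<sigma> c t y / uu \<beta> \<sigma> c t y" for t y
  define Uzz where "Uzz t y = ((- \<beta> * NN \<beta> \<sigma> c t y + G t y) * uu \<beta> \<sigma> c t y
       - NN \<beta> \<sigma> c t y * (\<beta> * NN \<beta> \<sigma> c t y)) / (uu \<beta> \<sigma> c t y * uu \<beta> \<sigma> c t y)" for t y
  define Ut where "Ut t y = \<sigma>\<^sup>2 / 2 * Uzz t y + \<gamma>\<^sup>2 / (4 * \<kappa>) * (Uz t y)\<^sup>2" for t y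
  have main: "((\<lambda>s. U \<sigma> \<gamma> \<kappa> c s z) has_real_derivative Ut t z) (at t within {0<..T}) \<and>
       ((\<lambda>y. U \<sigma> \<gamma> \<kappa> c t y) has_real_derivative Uz t z) (at z within {c..}) \<and>
       ((\<lambda>y. Uz t y) has_real_derivative Uzz t z) (at z within {c..}) \<and>
       Ut t z = \<sigma>\<^sup>2 / 2 * Uzz t z + \<gamma>\<^sup>2 / (4 * \<kappa>) * (Uz t z)\<^sup>2"
    if t: "t \<in> {0<..T}" and z: "z \<in> {c..}" for t z
  proof (intro conjI)
    have tp: "t > 0" using t by simp
    have up: "uu \<beta> \<sigma> c t z > 0" using uu_pos[OF tp assms(1)] z by simp
    have sp: "sqrt t > 0" using tp by simp
    show "Ut t z = \<sigma>\<^sup>2 / 2 * Uzz t z + \<gamma>\<^sup>2 / (4 * \<kappa>) * (Uz t z)\<^sup>2" by (simp add: Ut_def)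
    have "((\<lambda>s. 1 / \<beta> * ln (uu \<beta> \<sigma> c s z)) has_real_derivative
       1 / \<beta> * (1 / uu \<beta> \<sigma> c t z * (- (\<beta>\<^sup>2 * \<sigma>\<^sup>2 / 2) * NN \<beta> \<sigma> c t z
       + 2 / sqrt pi * exp (- ((XX \<sigma> c t z)\<^sup>2)) * (\<beta> * \<sigma> / (2 * sqrt 2 * sqrt t))))) (at t)"
      by (rule DERIV_cmult[OF DERIV_chain2[OF DERIV_ln_divide[OF up] ut[OF tp assms(1)]]])
    moreover have "1 / \<beta> * (1 / uu \<beta> \<sigma> c t z * (- (\<beta>\<^sup>2 * \<sigma>\<^sup>2 / 2) * NN \<beta> \<sigma> c t z
       + 2 / sqrt pi * exp (- ((XX \<sigma> c t z)\<^sup>2)) * (\<beta> * \<sigma> / (2 * sqrt 2 * sqrt t)))) = Ut t z"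
      unfolding Ut_def Uzz_def Uz_def gam G_def using bpos up sp assms(1)
      by (simp add: field_simps) (simp add: power2_eq_square algebra_simps)
    ultimately show "((\<lambda>s. U \<sigma> \<gamma> \<kappa> c s z) has_real_derivative Ut t z) (at t within {0<..T})"
      unfolding Ueq by (simp add: has_field_derivative_at_within)
    have "((\<lambda>y. 1 / \<beta> * ln (uu \<beta> \<sigma> c t y)) has_real_derivative
       1 / \<beta> * (1 / uu \<beta> \<sigma> c t z * (\<beta> * NN \<beta> \<sigma> c t z))) (at z)"
      by (rule DERIV_cmult[OF DERIV_chain2[OF DERIV_ln_divide[OF up] uy[OF tp assms(1)]]])
    moreover have "1 / \<beta> * (1 / uu \<beta> \<sigma> c t z * (\<beta> * NN \<beta> \<sigma> c t z)) = Uz t z"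
      unfolding Uz_def using bpos by simp
    ultimately show "((\<lambda>y. U \<sigma> \<gamma> \<kappa> c t y) has_real_derivative Uz t z) (at z within {c..})"
      unfolding Ueq by (simp add: has_field_derivative_at_within)
    have "((\<lambda>y. NN \<beta> \<sigma> c t y / uu \<beta> \<sigma> c t y) has_real_derivative Uzz t z) (at z)"
      unfolding Uzz_def G_def
      by (rule DERIV_divide[OF Ny[OF tp assms(1)] uy[OF tp assms(1)]]) (use up in simp)
    then show "((\<lambda>y. Uz t y) has_real_derivative Uzz t z) (at z within {c..})"
      unfolding Uz_def by (rule has_field_derivative_at_within)
  qed
  have bd: "Uz t c = -1" if t: "t \<in> {0<..T}" for t
  proof -
    have tp: "t > 0" using t by simp
    have up: "uu \<beta> \<sigma> c t c > 0" using uu_pos[OF tp assms(1)] by simp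
    have "XX \<sigma> c t c = 0" unfolding XX_def by simp
    then have "uu \<beta> \<sigma> c t c = - NN \<beta> \<sigma> c t c" unfolding uu_def NN_def by (simp add: erf_0)
    then show ?thesis unfolding Uz_def using up by (simp add: field_simps)
  qed
  show ?thesis
    apply (rule exI[of _ Ut], rule exI[of _ Uz], rule exI[of _ Uzz])
    using main bd by blast
qed

end
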